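(* Let $p$ be a prime, $q=p^m$, $\pi\in\mathbb C_p$ a root of $X^{p-1}+p$, and write $\exp(\pi X-\pi X^q)=\sum_{n\ge0}\lambda^{(m)}_nX^n$. Then in $\mathbb Z_p[\zeta_p]$: if $0\le n\le q-1$, $\lambda^{(m)}_n\equiv\frac{\pi^{s_p(n)}}{n!!}\mod\pi^{s_p(n)+p-1}$; if $n\ge q$, $\lambda^{(m)}_n\equiv0\mod\pi^{s_p(n)+p-1}$.
   Context: For $n=n_0+n_1p+\dots+n_tp^t$ with $0\le n_i\le p-1$, $s_p(n)=n_0+\dots+n_t$ and $n!!=n_0!\,n_1!\cdots n_t!$. Note $\mathbb Q_p(\pi)=\mathbb Q_p(\zeta_p)$ and $\pi$ generates the maximal ideal of $\mathbb Z_p[\zeta_p]$. *)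

theory Defs
  imports "HOL-Computational_Algebra.Computational_Algebra"
begin

text \<open>Base-p digit sum s_p(n): digit i of n is (n div p^i) mod p; digits with
  index > n vanish for p >= 2.\<close>
definition digit_sum :: "nat \<Rightarrow> nat \<Rightarrow> nat" where
  "digit_sum p n = (\<Sum>i<Suc n. (n div p ^ i) mod p)"

text \<open>n!! = product of the factorials of the base-p digits of n.\<close>
definition digit_fact :: "nat \<Rightarrow> nat \<Rightarrow> nat" where
  "digit_fact p n = (\<Prod>i<Suc n. fact ((n div p ^ i) mod p))"

definition lam :: "nat \<Rightarrow> nat \<Rightarrow> 'a::field_char_0 \<Rightarrow> nat \<Rightarrow> 'a" where
  "lam p m varpi n =
     fps_nth (fps_compose (fps_exp 1)
       (fps_const varpi * fps_X - fps_const varpi * fps_X ^ (p ^ m))) n"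

definition loc_int :: "nat \<Rightarrow> rat \<Rightarrow> bool" where
  "loc_int p r \<longleftrightarrow> \<not> int p dvd snd (quotient_of r)"

text \<open>a \<equiv> b mod varpi^k in Z_p[varpi] = Z_p[zeta_p], for a, b in Q(varpi):
  a - b = varpi^k * f(varpi) with f a polynomial with coefficients in Z_(p)
  (note Z_p[varpi] \<inter> Q(varpi) = Z_(p)[varpi]).\<close>
definition pcong :: "nat \<Rightarrow> 'a::field_char_0 \<Rightarrow> nat \<Rightarrow> 'a \<Rightarrow> 'a \<Rightarrow> bool" where
  "pcong p varpi k a b \<longleftrightarrow>
     (\<exists>f :: rat poly. (\<forall>i. loc_int p (coeff f i)) \<and>
        a - b = varpi ^ k * poly (map_poly of_rat f) varpi)"

end

theory Submission
  imports Defs "HOL-Number_Theory.Residues"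
begin


lemma loc_intI:
  assumes p: "prime p" and b: "\<not> int p dvd b"
  shows "loc_int p (of_int a / of_int b)"
proof -
  obtain n d where nd: "quotient_of (of_int a / of_int b) = (n, d)" by (cases "quotient_of (of_int a / of_int b)") auto
  have b0: "b \<noteq> 0" using b by auto
  have d0: "d > 0" using nd quotient_of_denom_pos by blast
  have cop: "coprime n d" using nd quotient_of_coprime by blast
  have eq: "(of_int a / of_int b :: rat) = of_int n / of_int d" using nd quotient_of_div by blast
  hence "(of_int (a * d) :: rat) = of_int (n * b)" using b0 d0 by (simp add: field_simps)
  hence "a * d = n * b" by (simp only: of_int_eq_iff)
  hence "d dvd n * b" by (metis dvd_triv_right)
  hence "d dvd b" using cop by (meson coprime_commute coprime_dvd_mult_right_iff)
  hence "\<not> int p dvd d" using b dvd_trans by blast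
  thus ?thesis unfolding loc_int_def using nd by simp
qed

lemma loc_intE:
  assumes "loc_int p r"
  obtains a b where "\<not> int p dvd b" "r = of_int a / of_int b"
proof -
  obtain n d where nd: "quotient_of r = (n, d)" by (cases "quotient_of r") auto
  show ?thesis using that[of d n] assms nd quotient_of_div unfolding loc_int_def by auto
qed

lemma loc_add: assumes "prime p" "loc_int p x" "loc_int p y" shows "loc_int p (x + y)"
proof -
  obtain a b where ab: "\<not> int p dvd b" "x = of_int a / of_int b" using assms(2) loc_intE by blast
  obtain c d where cd: "\<not> int p dvd d" "y = of_int c / of_int d" using assms(3) loc_intE by blast
  have b0: "b \<noteq> 0" "d \<noteq> 0" using ab cd by auto
  have "x + y = of_int (a*d + c*b) / of_int (b*d)" using ab cd b0 by (simp add: field_simps)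
  moreover have "\<not> int p dvd b * d" using ab cd assms(1)
    by (simp add: prime_dvd_mult_iff)
  ultimately show ?thesis using loc_intI assms(1) by metis
qed

lemma loc_mult: assumes "prime p" "loc_int p x" "loc_int p y" shows "loc_int p (x * y)"
proof -
  obtain a b where ab: "\<not> int p dvd b" "x = of_int a / of_int b" using assms(2) loc_intE by blast
  obtain c d where cd: "\<not> int p dvd d" "y = of_int c / of_int d" using assms(3) loc_intE by blast
  have "x * y = of_int (a*c) / of_int (b*d)" using ab cd by simp
  moreover have "\<not> int p dvd b * d" using ab cd assms(1)
    by (simp add: prime_dvd_mult_iff)
  ultimately show ?thesis using loc_intI assms(1) by metis
qed

lemma loc_of_int: "prime p \<Longrightarrow> loc_int p (of_int a)"
  using loc_intI[of p 1 a] by (cases "p = 1") auto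

lemma loc_of_nat: "prime p \<Longrightarrow> loc_int p (of_nat a)"
  using loc_of_int[of p "int a"] by simp

lemma loc_inv_int: "prime p \<Longrightarrow> \<not> int p dvd b \<Longrightarrow> loc_int p (1 / of_int b)"
  using loc_intI[of p b 1] by simp

lemma loc_inv_nat: "prime p \<Longrightarrow> \<not> p dvd b \<Longrightarrow> loc_int p (1 / of_nat b)"
  using loc_inv_int[of p "int b"] by simp

lemma loc_minus: "prime p \<Longrightarrow> loc_int p x \<Longrightarrow> loc_int p (- x)"
  using loc_mult[of p "-1" x] loc_of_int[of p "-1"] by simp

lemma loc_diff: "prime p \<Longrightarrow> loc_int p x \<Longrightarrow> loc_int p y \<Longrightarrow> loc_int p (x - y)"
  using loc_add[of p x "-y"] loc_minus by simp

lemma loc_sum: "prime p \<Longrightarrow> (\<And>i. i \<in> S \<Longrightarrow> loc_int p (f i)) \<Longrightarrow> loc_int p (sum f S)"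
proof (induction S rule: infinite_finite_induct)
  case (infinite A) thus ?case using loc_of_int[of p 0] by simp
next
  case empty thus ?case using loc_of_int[of p 0] by simp
next
  case (insert x F) thus ?case using loc_add by simp
qed

lemma loc_power: "prime p \<Longrightarrow> loc_int p x \<Longrightarrow> loc_int p (x ^ n)"
  by (induction n) (auto intro: loc_mult loc_of_int[of p 1, simplified])




inductive ZR :: "nat \<Rightarrow> 'a::field_char_0 \<Rightarrow> 'a \<Rightarrow> bool" for p w where
  ZR_rat: "loc_int p r \<Longrightarrow> ZR p w (of_rat r)"
| ZR_w: "ZR p w w"
| ZR_add: "ZR p w x \<Longrightarrow> ZR p w y \<Longrightarrow> ZR p w (x + y)"
| ZR_mult: "ZR p w x \<Longrightarrow> ZR p w y \<Longrightarrow> ZR p w (x * y)"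

definition ev :: "'a::field_char_0 \<Rightarrow> rat poly \<Rightarrow> 'a" where
  "ev w f = poly (map_poly of_rat f) w"

lemma map_poly_of_rat_add: "map_poly (of_rat :: rat \<Rightarrow> 'a::field_char_0) (f + g) = map_poly of_rat f + map_poly of_rat g"
  by (rule poly_eqI) (simp add: coeff_map_poly of_rat_add)

lemma map_poly_of_rat_smult: "map_poly (of_rat :: rat \<Rightarrow> 'a::field_char_0) (Polynomial.smult a g) = Polynomial.smult (of_rat a) (map_poly of_rat g)"
  by (rule poly_eqI) (simp add: coeff_map_poly of_rat_mult)

lemma map_poly_of_rat_pCons: "map_poly (of_rat :: rat \<Rightarrow> 'a::field_char_0) (pCons a g) = pCons (of_rat a) (map_poly of_rat g)"
  by (rule poly_eqI) (simp add: coeff_map_poly coeff_pCons split: nat.split)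

lemma map_poly_of_rat_mult: "map_poly (of_rat :: rat \<Rightarrow> 'a::field_char_0) (f * g) = map_poly of_rat f * map_poly of_rat g"
proof (induction f)
  case 0 thus ?case by simp
next
  case (pCons a f)
  show ?case by (simp add: mult_pCons_left map_poly_of_rat_add map_poly_of_rat_smult map_poly_of_rat_pCons pCons.IH)
qed

lemma ev_const: "ev w [:r:] = of_rat r"
  unfolding ev_def by (simp add: map_poly_pCons)
lemma ev_X: "ev w [:0,1:] = w"
  unfolding ev_def by (simp add: map_poly_pCons)
lemma ev_add: "ev w (f + g) = ev w f + ev w g"
  unfolding ev_def by (simp add: map_poly_of_rat_add)
lemma ev_mult: "ev w (f * g) = ev w f * ev w g"
  unfolding ev_def by (simp add: map_poly_of_rat_mult)

lemma ZR_poly: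
  assumes "prime p" "ZR p w x"
  shows "\<exists>f. (\<forall>i. loc_int p (Polynomial.coeff f i)) \<and> x = ev w f"
  using assms(2)
proof (induction rule: ZR.induct)
  case (ZR_rat r)
  have "\<forall>i. loc_int p (Polynomial.coeff [:r:] i)"
  proof
    fix i show "loc_int p (Polynomial.coeff [:r:] i)"
      using ZR_rat loc_of_int[OF assms(1), of 0] by (cases i) auto
  qed
  thus ?case using ev_const by metis
next
  case ZR_w
  have "\<forall>i. loc_int p (Polynomial.coeff [:0,1:] i)"
  proof
    fix i show "loc_int p (Polynomial.coeff [:0,1:] i)"
      using loc_of_int[OF assms(1), of 0] loc_of_int[OF assms(1), of 1]
      by (cases i; cases "i - 1") (auto simp: coeff_pCons)
  qed
  thus ?case using ev_X by metis
next
  case (ZR_add x y)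
  then obtain f g where fg: "\<forall>i. loc_int p (Polynomial.coeff f i)" "x = ev w f" "\<forall>i. loc_int p (Polynomial.coeff g i)" "y = ev w g" by blast
  have "\<forall>i. loc_int p (Polynomial.coeff (f + g) i)"
    using fg loc_add[OF assms(1)] by (simp only: coeff_add) blast
  thus ?case using fg ev_add by metis
next
  case (ZR_mult x y)
  then obtain f g where fg: "\<forall>i. loc_int p (Polynomial.coeff f i)" "x = ev w f" "\<forall>i. loc_int p (Polynomial.coeff g i)" "y = ev w g" by blast
  have "\<forall>i. loc_int p (Polynomial.coeff (f * g) i)"
  proof
    fix i show "loc_int p (Polynomial.coeff (f * g) i)"
      unfolding coeff_mult
      by (rule loc_sum[OF assms(1)], rule loc_mult[OF assms(1)]) (use fg in auto)
  qed
  thus ?case using fg ev_mult by metis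
qed

definition inI :: "nat \<Rightarrow> 'a::field_char_0 \<Rightarrow> nat \<Rightarrow> 'a \<Rightarrow> bool" where
  "inI p w k x \<longleftrightarrow> (\<exists>y. ZR p w y \<and> x = w ^ k * y)"

lemma pcongI: "prime p \<Longrightarrow> inI p w k (a - b) \<Longrightarrow> pcong p w k a b"
proof -
  assume a: "prime p" "inI p w k (a - b)"
  then obtain y where y: "ZR p w y" "a - b = w ^ k * y" unfolding inI_def by blast
  obtain f where f: "\<forall>i. loc_int p (Polynomial.coeff f i)" "y = ev w f" using ZR_poly[OF a(1) y(1)] by blast
  show ?thesis unfolding pcong_def using f y unfolding ev_def by blast
qed

lemma ZR_0: "prime p \<Longrightarrow> ZR p w 0"
proof -
  assume "prime p"
  hence "ZR p w (of_rat (of_int 0))" by (intro ZR_rat loc_of_int)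
  thus ?thesis by simp
qed
lemma ZR_1: "prime p \<Longrightarrow> ZR p w 1"
proof -
  assume "prime p"
  hence "ZR p w (of_rat (of_int 1))" by (intro ZR_rat loc_of_int)
  thus ?thesis by simp
qed
lemma ZR_minus: "prime p \<Longrightarrow> ZR p w x \<Longrightarrow> ZR p w (- x)"
proof -
  assume "prime p" "ZR p w x"
  moreover have "ZR p w (of_rat (of_int (-1)))" using \<open>prime p\<close> by (intro ZR_rat loc_of_int)
  ultimately have "ZR p w (of_rat (of_int (-1)) * x)" using ZR_mult by blast
  thus ?thesis by simp
qed
lemma ZR_power: "prime p \<Longrightarrow> ZR p w x \<Longrightarrow> ZR p w (x ^ n)"
proof (induction n)
  case 0 thus ?case using ZR_1 by simp
next
  case (Suc n) thus ?case using ZR_mult by simp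
qed

lemma inI_rat: "prime p \<Longrightarrow> loc_int p r \<Longrightarrow> inI p w k (w ^ k * of_rat r)"
  unfolding inI_def using ZR_rat by blast
lemma inI_ZR: "ZR p w y \<Longrightarrow> inI p w k (w ^ k * y)"
  unfolding inI_def by blast
lemma inI_0: "prime p \<Longrightarrow> inI p w k 0"
  unfolding inI_def using ZR_0 mult_zero_right by metis
lemma inI_add: "inI p w k x \<Longrightarrow> inI p w k y \<Longrightarrow> inI p w k (x + y)"
proof -
  assume "inI p w k x" "inI p w k y"
  then obtain a b where ab: "ZR p w a" "x = w ^ k * a" "ZR p w b" "y = w ^ k * b" unfolding inI_def by blast
  have "x + y = w ^ k * (a + b)" using ab by (simp add: algebra_simps)
  thus ?thesis unfolding inI_def using ZR_add ab by blast
qed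
lemma inI_minus: "prime p \<Longrightarrow> inI p w k x \<Longrightarrow> inI p w k (- x)"
proof -
  assume "prime p" "inI p w k x"
  then obtain a where ab: "ZR p w a" "x = w ^ k * a" unfolding inI_def by blast
  have "- x = w ^ k * (- a)" using ab by (simp add: algebra_simps)
  thus ?thesis unfolding inI_def using ZR_minus ab \<open>prime p\<close> by blast
qed
lemma inI_diff: "prime p \<Longrightarrow> inI p w k x \<Longrightarrow> inI p w k y \<Longrightarrow> inI p w k (x - y)"
proof -
  assume "prime p" "inI p w k x" "inI p w k y"
  hence "inI p w k (x + - y)" using inI_add inI_minus by blast
  thus ?thesis by simp
qed
lemma inI_mult: "inI p w k x \<Longrightarrow> inI p w l y \<Longrightarrow> inI p w (k + l) (x * y)"
proof -
  assume "inI p w k x" "inI p w l y"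
  then obtain a b where ab: "ZR p w a" "x = w ^ k * a" "ZR p w b" "y = w ^ l * b" unfolding inI_def by blast
  have "x * y = w ^ (k + l) * (a * b)" using ab by (simp add: power_add algebra_simps)
  thus ?thesis unfolding inI_def using ZR_mult ab by blast
qed
lemma inI_mono: "prime p \<Longrightarrow> l \<le> k \<Longrightarrow> inI p w k x \<Longrightarrow> inI p w l x"
proof -
  assume a: "prime p" "l \<le> k" "inI p w k x"
  then obtain y where y: "ZR p w y" "x = w ^ k * y" unfolding inI_def by blast
  have "w ^ k = w ^ l * w ^ (k - l)" using a(2) by (simp flip: power_add)
  hence "x = w ^ l * (w ^ (k - l) * y)" using y by (simp add: mult.assoc)
  moreover have "ZR p w (w ^ (k - l) * y)" using ZR_power[OF a(1) ZR_w] y ZR_mult by blast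
  ultimately show ?thesis unfolding inI_def by blast
qed
lemma inI_sum: "prime p \<Longrightarrow> (\<And>i. i \<in> S \<Longrightarrow> inI p w k (f i)) \<Longrightarrow> inI p w k (sum f S)"
proof (induction S rule: infinite_finite_induct)
  case (infinite A) thus ?case using inI_0 by simp
next
  case empty thus ?case using inI_0 by simp
next
  case (insert x F)
  have "inI p w k (f x)" using insert.prems by simp
  moreover have "inI p w k (sum f F)" using insert.IH insert.prems by simp
  ultimately show ?case using insert.hyps by (simp add: inI_add)
qed




lemma digit_vanish: assumes "2 \<le> (p::nat)" "n \<le> i" shows "(n div p ^ i) mod p = 0"
proof -
  have "n < 2 ^ n" by (rule less_exp)
  also have "2 ^ n \<le> p ^ n" using assms(1) by (simp add: power_mono)
  also have "p ^ n \<le> p ^ i" using assms by (simp add: power_increasing)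
  finally show ?thesis by simp
qed

lemma sum_vanish: fixes n M :: nat assumes "\<And>i. n \<le> i \<Longrightarrow> f i = (0::nat)" "n \<le> M"
  shows "(\<Sum>i<M. f i) = (\<Sum>i<n. f i)"
proof (rule sum.mono_neutral_right)
  show "{..<n} \<subseteq> {..<M}" using assms(2) by (auto simp: subset_iff)
  show "\<forall>i\<in>{..<M} - {..<n}. f i = 0" using assms(1) by auto
qed simp

lemma prod_vanish: fixes n M :: nat assumes "\<And>i. n \<le> i \<Longrightarrow> f i = (1::nat)" "n \<le> M"
  shows "(\<Prod>i<M. f i) = (\<Prod>i<n. f i)"
proof (rule prod.mono_neutral_right)
  show "{..<n} \<subseteq> {..<M}" using assms(2) by (auto simp: subset_iff)
  show "\<forall>i\<in>{..<M} - {..<n}. f i = 1" using assms(1) by auto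
qed simp

lemma ds_ext: assumes "2 \<le> p" "n \<le> N" shows "digit_sum p n = (\<Sum>i<N. (n div p ^ i) mod p)"
proof -
  have "digit_sum p n = (\<Sum>i<n. (n div p ^ i) mod p)"
    unfolding digit_sum_def by (rule sum_vanish) (use digit_vanish[OF assms(1)] in auto)
  also have "\<dots> = (\<Sum>i<N. (n div p ^ i) mod p)"
    by (rule sum_vanish[symmetric]) (use digit_vanish[OF assms(1)] assms(2) in auto)
  finally show ?thesis .
qed

lemma df_ext: assumes "2 \<le> p" "n \<le> N" shows "digit_fact p n = (\<Prod>i<N. fact ((n div p ^ i) mod p))"
proof -
  have "digit_fact p n = (\<Prod>i<n. fact ((n div p ^ i) mod p))"
    unfolding digit_fact_def by (rule prod_vanish) (use digit_vanish[OF assms(1)] in auto)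
  also have "\<dots> = (\<Prod>i<N. fact ((n div p ^ i) mod p))"
    by (rule prod_vanish[symmetric]) (use digit_vanish[OF assms(1)] assms(2) in auto)
  finally show ?thesis .
qed

lemma ds_rec: assumes "2 \<le> p" shows "digit_sum p n = n mod p + digit_sum p (n div p)"
proof -
  have "digit_sum p n = (\<Sum>i<Suc (Suc n). (n div p ^ i) mod p)" by (rule ds_ext[OF assms]) simp
  also have "\<dots> = n mod p + (\<Sum>i<Suc n. (n div p ^ Suc i) mod p)"
    by (subst sum.lessThan_Suc_shift) simp
  also have "(\<Sum>i<Suc n. (n div p ^ Suc i) mod p) = (\<Sum>i<Suc n. (n div p div p ^ i) mod p)"
    by (simp add: div_mult2_eq)
  also have "\<dots> = digit_sum p (n div p)" by (rule ds_ext[OF assms, symmetric]) (simp add: div_le_dividend le_SucI)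
  finally show ?thesis .
qed

lemma df_rec: assumes "2 \<le> p" shows "digit_fact p n = fact (n mod p) * digit_fact p (n div p)"
proof -
  have "digit_fact p n = (\<Prod>i<Suc (Suc n). fact ((n div p ^ i) mod p))" by (rule df_ext[OF assms]) simp
  also have "\<dots> = fact (n mod p) * (\<Prod>i<Suc n. fact ((n div p ^ Suc i) mod p))"
    by (subst prod.lessThan_Suc_shift) simp
  also have "(\<Prod>i<Suc n. fact ((n div p ^ Suc i) mod p) :: nat) = (\<Prod>i<Suc n. fact ((n div p div p ^ i) mod p))"
    by (simp add: div_mult2_eq)
  also have "\<dots> = digit_fact p (n div p)" by (rule df_ext[OF assms, symmetric]) (simp add: div_le_dividend le_SucI)
  finally show ?thesis .
qed

lemma ds_0[simp]: "digit_sum p 0 = 0" unfolding digit_sum_def by simp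
lemma df_0[simp]: "digit_fact p 0 = 1" unfolding digit_fact_def by simp

lemma ds_low: assumes "2 \<le> p" "n0 < p" shows "digit_sum p (n0 + p * t) = n0 + digit_sum p t"
  using ds_rec[OF assms(1), of "n0 + p * t"] assms by simp

lemma df_low: assumes "2 \<le> p" "n0 < p" shows "digit_fact p (n0 + p * t) = fact n0 * digit_fact p t"
  using df_rec[OF assms(1), of "n0 + p * t"] assms by simp

lemma ds_suc_le: assumes "2 \<le> p" shows "digit_sum p (Suc n) \<le> Suc (digit_sum p n)"
proof (induction n rule: less_induct)
  case (less n)
  show ?case
  proof (cases "Suc (n mod p) < p")
    case True
    have "Suc n = Suc (n mod p) + p * (n div p)" by simp
    hence "digit_sum p (Suc n) = Suc (n mod p) + digit_sum p (n div p)"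
      using ds_low[OF assms True] by metis
    thus ?thesis using ds_rec[OF assms, of n] by simp
  next
    case False
    have "n mod p < p" using assms by simp
    hence nm: "n mod p = p - 1" using False by linarith
    have "n = p * (n div p) + n mod p" by simp
    hence "n = p * (n div p) + (p - 1)" using nm by simp
    hence eq: "Suc n = 0 + p * Suc (n div p)" using assms by simp
    have "n div p < n \<or> n = 0" using assms by (cases "n = 0") (auto intro: div_less_dividend)
    hence ih: "digit_sum p (Suc (n div p)) \<le> Suc (digit_sum p (n div p))"
    proof
      assume "n div p < n" thus ?thesis using less.IH by blast
    next
      assume "n = 0" thus ?thesis using ds_rec[OF assms, of 1] assms by simp
    qed
    have "digit_sum p (Suc n) = digit_sum p (Suc (n div p))"
      using ds_low[OF assms, of 0 "Suc (n div p)"] eq assms by simp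
    also have "\<dots> \<le> Suc (digit_sum p (n div p))" by (rule ih)
    also have "\<dots> \<le> Suc (digit_sum p n)" using ds_rec[OF assms, of n] by simp
    finally show ?thesis .
  qed
qed

lemma ds_add: assumes "2 \<le> p" shows "digit_sum p (a + b) \<le> digit_sum p a + digit_sum p b"
proof (induction a arbitrary: b rule: less_induct)
  case (less a)
  show ?case
  proof (cases "a = 0")
    case True thus ?thesis by simp
  next
    case False
    have lt: "a div p < a" using False assms by simp
    define c where "c = (a mod p + b mod p) div p"
    have c1: "c \<le> 1"
    proof -
      have "a mod p + b mod p < 2 * p" using assms by (simp add: add_less_mono mult_2)
      hence "c < 2" unfolding c_def by (rule less_mult_imp_div_less)
      thus ?thesis by simp
    qed
    have m: "(a mod p + b mod p) mod p + p * c = a mod p + b mod p"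
      unfolding c_def by (rule mod_mult_div_eq)
    have ea: "a = p * (a div p) + a mod p" "b = p * (b div p) + b mod p" by simp_all
    have e0: "a + b = (a mod p + b mod p) mod p + (p * (a div p) + p * (b div p) + p * c)"
      using m ea by linarith
    have e1: "a + b = (a mod p + b mod p) mod p + p * (a div p + b div p + c)"
      using e0 by (simp only: distrib_left)
    have "digit_sum p (a + b) = (a mod p + b mod p) mod p + digit_sum p (a div p + b div p + c)"
    proof -
      have "(a mod p + b mod p) mod p < p" using assms by simp
      thus ?thesis using ds_low[OF assms, of "(a mod p + b mod p) mod p"] e1 by simp
    qed
    also have "digit_sum p (a div p + b div p + c) \<le> digit_sum p (a div p + b div p) + c"
      using c1 ds_suc_le[OF assms, of "a div p + b div p"] by (cases c) auto
    also have "digit_sum p (a div p + b div p) \<le> digit_sum p (a div p) + digit_sum p (b div p)"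
      using less.IH[OF lt] by blast
    finally have "digit_sum p (a + b) \<le> (a mod p + b mod p) mod p + c + digit_sum p (a div p) + digit_sum p (b div p)" by simp
    also have "(a mod p + b mod p) mod p + c \<le> a mod p + b mod p"
    proof -
      have "c \<le> p * c" using assms by simp
      thus ?thesis using m by linarith
    qed
    finally show ?thesis using ds_rec[OF assms, of a] ds_rec[OF assms, of b] by simp
  qed
qed




lemma suc_dvd: assumes "2 \<le> p" "p dvd Suc n"
  shows "Suc n div p = Suc (n div p)" "n mod p = p - 1" "Suc n = p * Suc (n div p)"
proof -
  have "Suc n mod p = 0" using assms by simp
  hence s: "Suc (n mod p) = p" using mod_Suc[of n p] by (auto split: if_splits)
  thus "Suc n div p = Suc (n div p)" using div_Suc[of n p] assms by simp
  show "n mod p = p - 1" using s by simp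
  have "Suc n = p * (n div p) + Suc (n mod p)" by simp
  hence "Suc n = p * (n div p) + p" using s by simp
  thus "Suc n = p * Suc (n div p)" by simp
qed

lemma suc_ndvd: assumes "2 \<le> p" "\<not> p dvd Suc n"
  shows "Suc n div p = n div p" "Suc n mod p = Suc (n mod p)" "Suc (n mod p) < p"
proof -
  have m: "Suc n mod p \<noteq> 0" using assms(2) by (auto simp: dvd_eq_mod_eq_0)
  thus "Suc n div p = n div p" using div_Suc[of n p] by simp
  show s: "Suc n mod p = Suc (n mod p)" using mod_Suc[of n p] m by (auto split: if_splits)
  show "Suc (n mod p) < p" using s assms by (metis mod_less_divisor order_less_le_trans pos2)
qed

lemma ds_succ:
  assumes "prime p"
  shows "\<exists>e w. Suc n = p ^ e * w \<and> \<not> p dvd w \<and> digit_sum p (Suc n) + (p - 1) * e = digit_sum p n + 1"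
proof (induction n rule: less_induct)
  case (less n)
  have p2: "2 \<le> p" using assms prime_ge_2_nat by blast
  show ?case
  proof (cases "p dvd Suc n")
    case False
    note f = suc_ndvd[OF p2 False]
    have "Suc n = Suc (n mod p) + p * (n div p)" by simp
    hence "digit_sum p (Suc n) = Suc (n mod p) + digit_sum p (n div p)"
      using ds_low[OF p2 f(3)] by metis
    hence "digit_sum p (Suc n) = digit_sum p n + 1" using ds_rec[OF p2, of n] by simp
    thus ?thesis using False by (intro exI[of _ 0] exI[of _ "Suc n"]) simp
  next
    case True
    note t = suc_dvd[OF p2 True]
    have n0: "n \<noteq> 0"
    proof
      assume "n = 0"
      hence "p dvd 1" using True by simp
      thus False using p2 by simp
    qed
    have lt: "n div p < n" by (rule div_less_dividend) (use n0 p2 in auto)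
    obtain e w where ew: "Suc (n div p) = p ^ e * w" "\<not> p dvd w"
      "digit_sum p (Suc (n div p)) + (p - 1) * e = digit_sum p (n div p) + 1"
      using less.IH[OF lt] by blast
    have "Suc n = p ^ Suc e * w" using t(3) ew(1) by simp
    moreover have a1: "digit_sum p (Suc n) = digit_sum p (Suc (n div p))"
      using ds_low[OF p2, of 0 "Suc (n div p)"] t(3) p2 by simp
    moreover have a2: "digit_sum p n = (p - 1) + digit_sum p (n div p)"
      using ds_rec[OF p2, of n] t(2) by simp
    moreover have a3: "(p - 1) * Suc e = (p - 1) + (p - 1) * e" by simp
    ultimately have "digit_sum p (Suc n) + (p - 1) * Suc e = digit_sum p n + 1"
      using ew(3) by linarith
    thus ?thesis using ew(2) \<open>Suc n = p ^ Suc e * w\<close> by blast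
  qed
qed

lemma df_ndvd: assumes "prime p" shows "\<not> p dvd digit_fact p n"
proof (induction n rule: less_induct)
  case (less n)
  have p2: "2 \<le> p" using assms prime_ge_2_nat by blast
  show ?case
  proof (cases "n = 0")
    case True thus ?thesis using p2 by simp
  next
    case False
    have lt: "n div p < n" by (rule div_less_dividend) (use False p2 in auto)
    have "n mod p < p" using p2 by simp
    hence "\<not> p dvd fact (n mod p)" using prime_dvd_fact_iff[OF assms] by simp
    thus ?thesis using less.IH[OF lt] df_rec[OF p2, of n] prime_dvd_mult_iff[OF assms] by simp
  qed
qed

fun Dp :: "nat \<Rightarrow> nat \<Rightarrow> nat" where
  "Dp p 0 = 1"
| "Dp p (Suc n) = (if p dvd Suc n then Dp p n else Suc n * Dp p n)"

lemma fact_Dp: assumes "2 \<le> p" shows "fact n = p ^ (n div p) * fact (n div p) * Dp p n"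
proof (induction n)
  case 0 thus ?case by simp
next
  case (Suc n)
  show ?case
  proof (cases "p dvd Suc n")
    case True
    note t = suc_dvd[OF assms True]
    have "(fact (Suc n) :: nat) = Suc n * fact n" by simp
    also have "\<dots> = p * Suc (n div p) * (p ^ (n div p) * fact (n div p) * Dp p n)" using Suc t(3) by simp
    also have "\<dots> = p ^ (Suc n div p) * fact (Suc n div p) * Dp p (Suc n)"
      using True t(1) by (simp add: algebra_simps)
    finally show ?thesis .
  next
    case False
    note f = suc_ndvd[OF assms False]
    have "(fact (Suc n) :: nat) = Suc n * fact n" by simp
    also have "\<dots> = p ^ (Suc n div p) * fact (Suc n div p) * Dp p (Suc n)"
      using Suc False f(1) by (simp add: algebra_simps)
    finally show ?thesis .
  qed
qed

lemma Dp_ndvd: assumes "prime p" shows "\<not> p dvd Dp p n"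
proof (induction n)
  case 0 thus ?case using assms by (metis Dp.simps(1) One_nat_def nat_dvd_1_iff_1 not_prime_1)
next
  case (Suc n) thus ?case by (metis Dp.simps(2) prime_dvd_mult_iff[OF assms])
qed

lemma Dp_cong: assumes "prime p"
  shows "[int (Dp p n) = (-1) ^ (n div p) * fact (n mod p)] (mod int p)"
proof (induction n)
  case 0 thus ?case by simp
next
  case (Suc n)
  have p2: "2 \<le> p" using assms prime_ge_2_nat by blast
  show ?case
  proof (cases "p dvd Suc n")
    case True
    note t = suc_dvd[OF p2 True]
    have w: "[fact (p - 1) = - 1] (mod int p)" using wilson_theorem[OF assms] .
    have "[int (Dp p (Suc n)) = (-1) ^ (n div p) * fact (p - 1)] (mod int p)"
      using Suc True t(2) by simp
    moreover have "[(-1) ^ (n div p) * fact (p - 1) = (-1) ^ (n div p) * (-1 :: int)] (mod int p)"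
      by (rule cong_scalar_left[OF w])
    ultimately have "[int (Dp p (Suc n)) = (-1) ^ (n div p) * (-1 :: int)] (mod int p)"
      using cong_trans by blast
    moreover have "Suc n mod p = 0" using True by simp
    ultimately show ?thesis using t(1) by simp
  next
    case False
    note f = suc_ndvd[OF p2 False]
    have c1: "[int (Suc n) = int (Suc (n mod p))] (mod int p)"
      unfolding cong_def using f(2) by (metis of_nat_mod mod_mod_trivial)
    have "[int (Suc n) * int (Dp p n) = int (Suc (n mod p)) * ((-1) ^ (n div p) * fact (n mod p))] (mod int p)"
      by (rule cong_mult[OF c1 Suc])
    moreover have "int (Suc (n mod p)) * ((-1) ^ (n div p) * fact (n mod p)) = (-1) ^ (Suc n div p) * fact (Suc n mod p)"
      using f(1,2) by (simp add: algebra_simps)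
    moreover have "int (Dp p (Suc n)) = int (Suc n) * int (Dp p n)"
      by (simp only: Dp.simps if_not_P[OF False] of_nat_mult)
    ultimately show ?thesis by metis
  qed
qed




lemma inv_cong:
  fixes a b :: int
  assumes p: "prime p" and a: "\<not> int p dvd a" and b: "\<not> int p dvd b" and c: "[a = b] (mod int p)"
  shows "\<exists>e. loc_int p e \<and> 1 / (of_int a :: rat) = 1 / of_int b + of_nat p * e"
proof -
  have "int p dvd b - a" using cong_sym[OF c] by (simp add: cong_iff_dvd_diff)
  then obtain t where t: "b - a = int p * t" by blast
  have a0: "a \<noteq> 0" "b \<noteq> 0" using a b by auto
  have nd: "\<not> int p dvd a * b" using a b p by (simp add: prime_dvd_mult_iff)
  have "loc_int p (of_int t / of_int (a * b))" by (rule loc_intI[OF p nd])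
  moreover have "1 / (of_int a :: rat) = 1 / of_int b + of_nat p * (of_int t / of_int (a * b))"
  proof -
    have bt: "(of_int b :: rat) - of_int a = of_nat p * of_int t" using t by (metis of_int_diff of_int_mult of_int_of_nat_eq)
    have a1: "(of_int a :: rat) \<noteq> 0" "(of_int b :: rat) \<noteq> 0" using a0 by auto
    have "1 / (of_int a :: rat) = 1 / of_int b + (of_int b - of_int a) / (of_int a * of_int b)"
      using a1 by (simp add: field_simps)
    thus ?thesis unfolding bt by simp
  qed
  ultimately show ?thesis by blast
qed

lemma alt_sum_rev: assumes "1 \<le> J"
  shows "(\<Sum>j\<le>J. of_nat (J choose j) * (-1) ^ (J - j) :: rat) = 0"
proof -
  have "(\<Sum>j\<le>J. of_nat (J choose j) * (-1) ^ (J - j) :: rat) = (\<Sum>j\<le>J. (-1) ^ J * ((-1) ^ j * of_nat (J choose j)))"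
  proof (rule sum.cong)
    fix j assume "j \<in> {..J}"
    hence "J = (J - j) + j" by simp
    hence "(-1 :: rat) ^ J = (-1) ^ (J - j) * (-1) ^ j" by (metis power_add)
    hence "(-1 :: rat) ^ J * (-1) ^ j = (-1) ^ (J - j) * ((-1) ^ j * (-1) ^ j)" by (simp add: algebra_simps)
    also have "(-1 :: rat) ^ j * (-1) ^ j = 1" by (simp flip: power_add add: power_even_eq[symmetric])
    finally show "of_nat (J choose j) * (-1) ^ (J - j) = (-1) ^ J * ((-1) ^ j * (of_nat (J choose j) :: rat))"
      by (simp add: algebra_simps)
  qed simp
  also have "\<dots> = (-1) ^ J * (\<Sum>j\<le>J. (-1) ^ j * of_nat (J choose j))" by (simp add: sum_distrib_left)
  also have "\<dots> = 0" using choose_alternating_sum[of J] assms by simp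
  finally show ?thesis .
qed

lemma NT:
  assumes p: "prime p" and k0: "k0 < p" and J: "1 \<le> J"
  shows "\<exists>u. loc_int p u \<and> of_nat (fact J) * (\<Sum>j\<le>J. of_nat p ^ (J - j) / (of_nat (fact (k0 + p * (J - j))) * of_nat (fact j))) = (of_nat p * u :: rat)"
proof -
  have p2: "2 \<le> p" using p prime_ge_2_nat by blast
  have "\<forall>i. \<exists>e. loc_int p e \<and> 1 / (of_int (int (Dp p (k0 + p * i))) :: rat) = 1 / of_int ((-1) ^ i * fact k0) + of_nat p * e"
  proof
    fix i
    have c: "[int (Dp p (k0 + p * i)) = (-1) ^ i * fact k0] (mod int p)"
      using Dp_cong[OF p, of "k0 + p * i"] k0 by simp
    have a: "\<not> int p dvd int (Dp p (k0 + p * i))" using Dp_ndvd[OF p] by simp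
    have "\<not> p dvd fact k0" using prime_dvd_fact_iff[OF p] k0 by simp
    hence "\<not> int p dvd fact k0" by (metis int_dvd_int_iff of_nat_fact)
    hence b: "\<not> int p dvd (-1) ^ i * fact k0" by (simp add: dvd_mult_unit_iff' )
    show "\<exists>e. loc_int p e \<and> 1 / (of_int (int (Dp p (k0 + p * i))) :: rat) = 1 / of_int ((-1) ^ i * fact k0) + of_nat p * e"
      by (rule inv_cong[OF p a b c])
  qed
  then obtain e where e0: "\<And>i. loc_int p (e i)" "\<And>i. 1 / (of_int (int (Dp p (k0 + p * i))) :: rat) = 1 / of_int ((-1) ^ i * fact k0) + of_nat p * e i"
    by metis
  have inv: "1 / ((-1) ^ i * x) = (-1) ^ i / (x :: rat)" for i x
    by (cases "even i") simp_all
  have e: "\<And>i. 1 / (of_nat (Dp p (k0 + p * i)) :: rat) = (-1) ^ i / of_nat (fact k0) + of_nat p * e i"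
    using e0(2) inv by simp
  have tm: "of_nat (fact J) * (of_nat p ^ (J - j) / (of_nat (fact (k0 + p * (J - j))) * of_nat (fact j)))
      = of_nat (J choose j) * (1 / of_nat (Dp p (k0 + p * (J - j))) :: rat)" if j: "j \<le> J" for j
  proof -
    define i where "i = J - j"
    have f1: "fact (k0 + p * i) = p ^ i * fact i * Dp p (k0 + p * i)" using fact_Dp[OF p2, of "k0 + p * i"] k0 by simp
    have f2: "fact J = fact j * fact i * (J choose j)" using binomial_fact_lemma[OF j] i_def by simp
    have r1: "(of_nat (fact (k0 + p * i)) :: rat) = of_nat p ^ i * of_nat (fact i) * of_nat (Dp p (k0 + p * i))"
      using f1 by (metis of_nat_mult of_nat_power)
    have r2: "(of_nat (fact J) :: rat) = of_nat (fact j) * of_nat (fact i) * of_nat (J choose j)"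
      using f2 by (metis of_nat_mult)
    have nz: "(of_nat (Dp p (k0 + p * i)) :: rat) \<noteq> 0" "(of_nat p :: rat) \<noteq> 0"
      "(of_nat (fact i) :: rat) \<noteq> 0" "(of_nat (fact j) :: rat) \<noteq> 0"
      using Dp_ndvd[OF p, of "k0 + p * i"] p2 by (auto intro: gr0I)
    show ?thesis unfolding i_def[symmetric] r1 r2 using nz by (simp add: field_simps)
  qed
  define u where "u = (\<Sum>j\<le>J. of_nat (J choose j) * e (J - j))"
  have "loc_int p u" unfolding u_def
    by (rule loc_sum[OF p], rule loc_mult[OF p]) (simp_all add: loc_of_nat[OF p] e0(1))
  moreover have "of_nat (fact J) * (\<Sum>j\<le>J. of_nat p ^ (J - j) / (of_nat (fact (k0 + p * (J - j))) * of_nat (fact j))) = (of_nat p * u :: rat)"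
  proof -
    have "of_nat (fact J) * (\<Sum>j\<le>J. of_nat p ^ (J - j) / (of_nat (fact (k0 + p * (J - j))) * of_nat (fact j)))
        = (\<Sum>j\<le>J. of_nat (J choose j) * (1 / of_nat (Dp p (k0 + p * (J - j))) :: rat))"
      unfolding sum_distrib_left by (rule sum.cong[OF refl], rule tm) simp
    also have "\<dots> = (\<Sum>j\<le>J. of_nat (J choose j) * ((-1) ^ (J - j) / of_nat (fact k0) + of_nat p * e (J - j)))"
      by (simp only: e)
    also have "\<dots> = (\<Sum>j\<le>J. of_nat (J choose j) * (-1) ^ (J - j)) / of_nat (fact k0) + of_nat p * u"
      unfolding u_def by (simp add: sum.distrib sum_distrib_left sum_divide_distrib algebra_simps)
    also have "\<dots> = of_nat p * u" using alt_sum_rev[OF J] by simp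
    finally show ?thesis .
  qed
  ultimately show ?thesis by blast
qed




locale dw =
  fixes p :: nat and w :: "'a::field_char_0"
  assumes prime: "prime p" and wp: "w ^ (p - 1) + of_nat p = 0"
begin

lemma p2: "2 \<le> p" using prime prime_ge_2_nat by blast

lemma pw: "(of_nat p :: 'a) = - (w ^ (p - 1))" using wp by (simp add: eq_neg_iff_add_eq_0 add.commute)

lemma wpow: "w ^ ((p - 1) * e) = (-1) ^ e * (of_nat p :: 'a) ^ e"
proof -
  have "w ^ ((p - 1) * e) = (w ^ (p - 1)) ^ e" by (simp only: power_mult)
  also have "\<dots> = (- (of_nat p :: 'a)) ^ e" by (simp only: pw minus_minus)
  also have "\<dots> = (-1) ^ e * (of_nat p :: 'a) ^ e" by (rule power_minus)
  finally show ?thesis .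
qed

lemma alg1: "(F::'b::field) \<noteq> 0 \<Longrightarrow> y * x / (Q * F) = (x / F) * y / Q"
  by (simp add: field_simps)
lemma alg2: "(C::'b::field) \<noteq> 0 \<Longrightarrow> P \<noteq> 0 \<Longrightarrow> W * (s * P) * V / (P * C) = W * (V * s * (1 / C))"
  by (simp add: field_simps)

lemma legendre: "\<exists>v. loc_int p v \<and> w ^ n / of_nat (fact n) = w ^ digit_sum p n * of_rat v"
proof (induction n)
  case 0
  show ?case using loc_of_int[OF prime, of 1] by (intro exI[of _ 1]) simp
next
  case (Suc n)
  obtain v where v: "loc_int p v" "w ^ n / of_nat (fact n) = w ^ digit_sum p n * of_rat v" using Suc by blast
  obtain e c where ec: "Suc n = p ^ e * c" "\<not> p dvd c" "digit_sum p (Suc n) + (p - 1) * e = digit_sum p n + 1"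
    using ds_succ[OF prime, of n] by blast
  have c0: "(of_nat c :: 'a) \<noteq> 0" "(of_nat p :: 'a) \<noteq> 0" using ec(2) p2 by (auto intro: gr0I)
  define r where "r = v * (-1) ^ e * (1 / of_nat c)"
  have lr: "loc_int p r" unfolding r_def
    by (intro loc_mult[OF prime] v loc_power[OF prime] loc_inv_nat[OF prime] ec(2)) (rule loc_of_int[OF prime, of "-1", simplified])
  have fs: "(of_nat (fact (Suc n)) :: 'a) = of_nat p ^ e * of_nat c * of_nat (fact n)"
  proof -
    have "(fact (Suc n) :: nat) = Suc n * fact n" by simp
    also have "\<dots> = p ^ e * c * fact n" using ec(1) by simp
    finally have "(fact (Suc n) :: nat) = p ^ e * c * fact n" .
    hence "(of_nat (fact (Suc n)) :: 'a) = of_nat (p ^ e * c * fact n)" by (simp only:)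
    thus ?thesis by (simp only: of_nat_mult of_nat_power)
  qed
  have pe: "(of_nat p :: 'a) ^ e \<noteq> 0" using c0 by simp
  have fn: "(of_nat (fact n) :: 'a) \<noteq> 0" by simp
  have ws: "w ^ (digit_sum p n + 1) = w ^ digit_sum p (Suc n) * ((-1) ^ e * of_nat p ^ e)"
    using ec(3) wpow[of e] by (metis power_add)
  have "w ^ Suc n / of_nat (fact (Suc n)) = (w ^ n / of_nat (fact n)) * w / (of_nat p ^ e * of_nat c)"
    unfolding fs power_Suc using fn by (simp add: alg1)
  also have "\<dots> = w ^ (digit_sum p n + 1) * of_rat v / (of_nat p ^ e * of_nat c)"
    unfolding v(2) by (simp add: mult_ac)
  also have "\<dots> = w ^ digit_sum p (Suc n) * ((-1) ^ e * of_nat p ^ e) * of_rat v / (of_nat p ^ e * of_nat c)"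
    unfolding ws ..
  also have "\<dots> = w ^ digit_sum p (Suc n) * of_rat r"
    unfolding r_def of_rat_mult of_rat_divide of_rat_power of_rat_1 of_rat_of_nat_eq of_rat_neg_one
    by (rule alg2[OF c0(1) pe])
  finally have eq: "w ^ Suc n / of_nat (fact (Suc n)) = w ^ digit_sum p (Suc n) * of_rat r" .
  show ?case by (rule exI[of _ r], rule conjI[OF lr eq])
qed

end



definition theta :: "nat \<Rightarrow> 'a::field_char_0 \<Rightarrow> nat \<Rightarrow> 'a" where
  "theta p w k = (\<Sum>j\<le>k div p. w ^ (k - p * j) / of_nat (fact (k - p * j)) * (- w) ^ j / of_nat (fact j))"

context dw begin

lemma theta_small: "k < p \<Longrightarrow> theta p w k = w ^ k / of_nat (fact k)"
  unfolding theta_def by simp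

lemma alg4: "(a::'b::comm_ring_1) * (b * (c * d)) = (a * c) * b * d"
  by (simp add: mult_ac)
lemma alg5: "(x::'b::field) / F1 * y / F2 = (x * y) / (F1 * F2)"
  by simp

lemma theta_term:
  assumes j: "j \<le> J" and k0: "k0 < p"
  shows "w ^ (k0 + p * J - p * j) / of_nat (fact (k0 + p * J - p * j)) * (- w) ^ j / of_nat (fact j)
       = (-1) ^ J * w ^ (k0 + J) * of_rat (of_nat p ^ (J - j) / (of_nat (fact (k0 + p * (J - j))) * of_nat (fact j)))"
proof -
  have pj: "p * j \<le> p * J" using j by simp
  have e1: "k0 + p * J - p * j = k0 + p * (J - j)" using pj by (simp add: diff_mult_distrib2)
  obtain q where q: "p = Suc q" using p2 by (cases p) auto
  obtain i where i: "J = j + i" using j le_Suc_ex by blast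
  have e2: "k0 + p * (J - j) + j = (k0 + J) + (p - 1) * (J - j)"
    unfolding q i by simp
  have s: "(-1 :: 'a) ^ j * (-1) ^ (J - j) = (-1) ^ J" using j by (simp flip: power_add)
  have "w ^ (k0 + p * (J - j)) * (- w) ^ j = (-1) ^ j * w ^ (k0 + p * (J - j) + j)"
    unfolding power_minus[of w j] power_add[of w "k0 + p * (J - j)" j] by (rule mult.left_commute)
  also have "\<dots> = (-1) ^ j * (w ^ (k0 + J) * ((-1) ^ (J - j) * of_nat p ^ (J - j)))"
    unfolding e2 power_add[of w "k0 + J"] wpow ..
  also have "\<dots> = (-1) ^ J * w ^ (k0 + J) * of_nat p ^ (J - j)"
    unfolding alg4 s ..
  finally have m: "w ^ (k0 + p * (J - j)) * (- w) ^ j = (-1) ^ J * w ^ (k0 + J) * of_nat p ^ (J - j)" .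
  have "w ^ (k0 + p * J - p * j) / of_nat (fact (k0 + p * J - p * j)) * (- w) ^ j / of_nat (fact j)
     = (w ^ (k0 + p * (J - j)) * (- w) ^ j) / (of_nat (fact (k0 + p * (J - j))) * of_nat (fact j))"
    unfolding e1 by (rule alg5)
  also have "\<dots> = (-1) ^ J * w ^ (k0 + J) * (of_nat p ^ (J - j) / (of_nat (fact (k0 + p * (J - j))) * of_nat (fact j)))"
    unfolding m by (rule times_divide_eq_right[symmetric])
  also have "\<dots> = (-1) ^ J * w ^ (k0 + J) * of_rat (of_nat p ^ (J - j) / (of_nat (fact (k0 + p * (J - j))) * of_nat (fact j)))"
    by (simp only: of_rat_divide of_rat_mult of_rat_power of_rat_of_nat_eq)
  finally show ?thesis .
qed

lemma alg3: "(F::'b::field) \<noteq> 0 \<Longrightarrow> s * (W0 * WJ) * R = s * W0 * (WJ / F) * (F * R)"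
  by (simp add: field_simps)

lemma theta_big:
  assumes k: "p \<le> k"
  shows "inI p w (digit_sum p k + p - 1) (theta p w k)"
proof -
  define J where "J = k div p"
  define k0 where "k0 = k mod p"
  have k0p: "k0 < p" unfolding k0_def using p2 by simp
  have J1: "1 \<le> J"
  proof -
    have "p div p \<le> k div p" by (rule div_le_mono[OF k])
    thus ?thesis unfolding J_def using p2 by simp
  qed
  have kk: "k = k0 + p * J" unfolding J_def k0_def by simp
  define R where "R = (\<Sum>j\<le>J. of_nat p ^ (J - j) / (of_nat (fact (k0 + p * (J - j))) * of_nat (fact j)) :: rat)"
  have th: "theta p w k = (-1) ^ J * w ^ (k0 + J) * of_rat R"
  proof -
    have "theta p w k = (\<Sum>j\<le>J. w ^ (k0 + p * J - p * j) / of_nat (fact (k0 + p * J - p * j)) * (- w) ^ j / of_nat (fact j))"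
      unfolding theta_def J_def[symmetric] using kk by simp
    also have "\<dots> = (\<Sum>j\<le>J. (-1) ^ J * w ^ (k0 + J) * of_rat (of_nat p ^ (J - j) / (of_nat (fact (k0 + p * (J - j))) * of_nat (fact j))))"
      by (rule sum.cong[OF refl], rule theta_term[OF _ k0p]) simp
    also have "\<dots> = (-1) ^ J * w ^ (k0 + J) * of_rat R"
      unfolding R_def of_rat_sum sum_distrib_left ..
    finally show ?thesis .
  qed
  obtain u where u: "loc_int p u" "of_nat (fact J) * R = of_nat p * u"
    using NT[OF prime k0p J1] unfolding R_def by blast
  obtain v where v: "loc_int p v" "w ^ J / of_nat (fact J) = w ^ digit_sum p J * of_rat v"
    using legendre by blast
  have fJ: "(of_nat (fact J) :: 'a) \<noteq> 0" by simp
  have "theta p w k = (-1) ^ J * w ^ k0 * (w ^ J / of_nat (fact J)) * (of_nat (fact J) * of_rat R)"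
    unfolding th power_add by (rule alg3[OF fJ])
  also have "of_nat (fact J) * of_rat R = (of_rat (of_nat (fact J) * R) :: 'a)"
    by (simp only: of_rat_mult of_rat_of_nat_eq)
  also have "\<dots> = of_nat p * of_rat u" unfolding u(2) by (simp only: of_rat_mult of_rat_of_nat_eq)
  also have "\<dots> = - (w ^ (p - 1)) * of_rat u" unfolding pw ..
  also note v(2)
  also have "(-1) ^ J * w ^ k0 * (w ^ digit_sum p J * of_rat v) * (- (w ^ (p - 1)) * of_rat u)
      = w ^ (k0 + digit_sum p J + (p - 1)) * of_rat (- ((-1) ^ J * v * u))"
    by (simp add: of_rat_mult of_rat_minus of_rat_power power_add mult_ac)
  also have "k0 + digit_sum p J + (p - 1) = digit_sum p k + p - 1"
    using ds_low[OF p2 k0p, of J] kk p2 by simp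
  finally have eq: "theta p w k = w ^ (digit_sum p k + p - 1) * of_rat (- ((-1) ^ J * v * u))" .
  have "loc_int p (- ((-1) ^ J * v * u))"
    by (intro loc_minus[OF prime] loc_mult[OF prime] loc_power[OF prime] u(1) v(1) loc_of_int[OF prime, of "-1", simplified])
  thus ?thesis unfolding eq by (rule inI_rat[OF prime])
qed

end



lemma ode_unique:
  fixes A B g :: "'a::field_char_0 fps"
  assumes "fps_deriv A = A * g" "fps_deriv B = B * g" "A $ 0 = B $ 0"
  shows "A = B"
proof -
  define D where "D = A - B"
  have dD: "fps_deriv D = D * g" unfolding D_def using assms(1,2) by (simp add: algebra_simps)
  have "D $ n = 0" for n
  proof (induction n rule: less_induct)
    case (less n)
    show ?case
    proof (cases n)
      case 0 thus ?thesis unfolding D_def using assms(3) by simp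
    next
      case (Suc k)
      have "(fps_deriv D) $ k = of_nat (Suc k) * D $ Suc k" by (simp add: fps_deriv_nth)
      moreover have "(D * g) $ k = 0"
        unfolding fps_mult_nth using less.IH Suc by (intro sum.neutral) auto
      ultimately have "of_nat (Suc k) * D $ Suc k = 0" using dD by simp
      thus ?thesis using Suc by (simp del: of_nat_Suc)
    qed
  qed
  hence "D = 0" by (simp add: fps_eq_iff)
  thus ?thesis unfolding D_def by simp
qed

lemma expc_deriv:
  fixes G :: "'a::field_char_0 fps"
  assumes "G $ 0 = 0"
  shows "fps_deriv (fps_exp 1 oo G) = (fps_exp 1 oo G) * fps_deriv G"
  using fps_compose_deriv[OF assms, of "fps_exp 1"] by simp

lemma expc_add:
  fixes G H :: "'a::field_char_0 fps"
  assumes "G $ 0 = 0" "H $ 0 = 0"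
  shows "fps_exp 1 oo (G + H) = (fps_exp 1 oo G) * (fps_exp 1 oo H)"
proof (rule ode_unique)
  have "(G + H) $ 0 = 0" using assms by simp
  thus "fps_deriv (fps_exp 1 oo (G + H)) = (fps_exp 1 oo (G + H)) * fps_deriv (G + H)"
    by (rule expc_deriv)
  show "fps_deriv ((fps_exp 1 oo G) * (fps_exp 1 oo H)) = ((fps_exp 1 oo G) * (fps_exp 1 oo H)) * fps_deriv (G + H)"
    using expc_deriv[OF assms(1)] expc_deriv[OF assms(2)] by (simp add: algebra_simps)
  show "(fps_exp 1 oo (G + H)) $ 0 = ((fps_exp 1 oo G) * (fps_exp 1 oo H)) $ 0"
    by simp
qed

lemma compose_Xp_nth:
  fixes F :: "'a::comm_ring_1 fps"
  assumes p: "0 < p"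
  shows "(F oo fps_X ^ p) $ n = (if p dvd n then F $ (n div p) else 0)"
proof -
  have "(F oo fps_X ^ p) $ n = (\<Sum>i\<in>{0..n}. F $ i * ((fps_X ^ p) ^ i) $ n)" by (rule fps_compose_nth)
  also have "\<dots> = (\<Sum>i\<in>{0..n}. if i = n div p then (if p dvd n then F $ i else 0) else 0)"
  proof (rule sum.cong[OF refl])
    fix i assume "i \<in> {0..n}"
    have "((fps_X ^ p) ^ i :: 'a fps) $ n = (if n = p * i then 1 else 0)" by (simp add: power_mult[symmetric])
    moreover have "n = p * i \<longleftrightarrow> (i = n div p \<and> p dvd n)" using p by auto
    ultimately show "F $ i * ((fps_X ^ p) ^ i) $ n = (if i = n div p then (if p dvd n then F $ i else 0) else 0)"
      by auto
  qed
  also have "\<dots> = (if p dvd n then F $ (n div p) else 0)"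
    by (subst sum.delta) (auto simp: div_le_dividend)
  finally show ?thesis .
qed

lemma mult_compose_Xp_nth:
  fixes A B :: "'a::comm_ring_1 fps"
  assumes p: "0 < p"
  shows "(A * (B oo fps_X ^ p)) $ n = (\<Sum>j\<le>n div p. A $ (n - p * j) * B $ j)"
proof -
  have "(A * (B oo fps_X ^ p)) $ n = ((B oo fps_X ^ p) * A) $ n" by (simp add: mult.commute)
  also have "\<dots> = (\<Sum>i=0..n. (B oo fps_X ^ p) $ i * A $ (n - i))" by (rule fps_mult_nth)
  also have "\<dots> = (\<Sum>i\<in>{0..n}. if p dvd i then B $ (i div p) * A $ (n - i) else 0)"
    by (rule sum.cong[OF refl]) (simp add: compose_Xp_nth[OF p])
  also have "\<dots> = (\<Sum>i\<in>{i\<in>{0..n}. p dvd i}. B $ (i div p) * A $ (n - i))"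
    by (rule sum.inter_filter[symmetric]) simp
  also have "{i\<in>{0..n}. p dvd i} = (\<lambda>j. p * j) ` {..n div p}"
  proof
    show "{i\<in>{0..n}. p dvd i} \<subseteq> (\<lambda>j. p * j) ` {..n div p}"
    proof
      fix i assume "i \<in> {i\<in>{0..n}. p dvd i}"
      then obtain j where "i = p * j" "p * j \<le> n" by auto
      moreover hence "j \<le> n div p" using p by (metis div_le_mono nonzero_mult_div_cancel_left less_not_refl2)
      ultimately show "i \<in> (\<lambda>j. p * j) ` {..n div p}" by auto
    qed
    show "(\<lambda>j. p * j) ` {..n div p} \<subseteq> {i\<in>{0..n}. p dvd i}"
    proof
      fix i assume "i \<in> (\<lambda>j. p * j) ` {..n div p}"
      then obtain j where j: "i = p * j" "j \<le> n div p" by auto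
      hence "p * j \<le> p * (n div p)" by simp
      also have "\<dots> \<le> n" by simp
      finally show "i \<in> {i\<in>{0..n}. p dvd i}" using j by auto
    qed
  qed
  also have "(\<Sum>i\<in>(\<lambda>j. p * j) ` {..n div p}. B $ (i div p) * A $ (n - i)) = (\<Sum>j\<le>n div p. B $ (p * j div p) * A $ (n - p * j))"
    by (subst sum.reindex) (use p in \<open>auto simp: inj_on_def\<close>)
  also have "\<dots> = (\<Sum>j\<le>n div p. A $ (n - p * j) * B $ j)"
    using p by (simp add: mult.commute)
  finally show ?thesis .
qed




lemma lam_0: "lam p 0 w n = (if n = 0 then 1 else (0 :: 'a::field_char_0))"
  unfolding lam_def by (simp add: fps_compose_0_right)

lemma Xk_compose:
  assumes "(c :: 'a::idom fps) $ 0 = 0"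
  shows "fps_X ^ k oo c = c ^ k"
  using fps_compose_power[OF assms, of fps_X k] fps_X_fps_compose_startby0[OF assms] by simp

lemma cX_compose:
  assumes "(c :: 'a::idom fps) $ 0 = 0"
  shows "(fps_const a * fps_X ^ k) oo c = fps_const a * c ^ k"
  using fps_compose_mult_distrib[OF assms, of "fps_const a" "fps_X ^ k"] Xk_compose[OF assms] by simp

lemma lam_Suc:
  fixes w :: "'a::field_char_0"
  assumes p: "0 < p"
  shows "lam p (Suc m) w n = (\<Sum>j\<le>n div p. theta p w (n - p * j) * lam p m w j)"
proof -
  define G where "G m = fps_const w * fps_X - fps_const w * fps_X ^ (p ^ m)" for m
  have lamG: "lam p m w n = (fps_exp 1 oo G m) $ n" for m n unfolding lam_def G_def ..
  have X0: "(fps_X ^ p :: 'a fps) $ 0 = 0" using p by simp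
  have G0: "G m $ 0 = 0" for m unfolding G_def using p by simp
  have Gc: "G m oo fps_X ^ p = fps_const w * fps_X ^ p - fps_const w * fps_X ^ (p ^ Suc m)"
  proof -
    have "G m oo fps_X ^ p = (fps_const w * fps_X ^ 1 oo fps_X ^ p) - (fps_const w * fps_X ^ (p ^ m) oo fps_X ^ p)"
      unfolding G_def by (simp add: fps_compose_sub_distrib)
    also have "\<dots> = fps_const w * fps_X ^ p - fps_const w * fps_X ^ (p ^ Suc m)"
      unfolding cX_compose[OF X0] by (simp add: power_mult[symmetric] mult.commute)
    finally show ?thesis .
  qed
  define L where "L = fps_const (-w) * fps_X"
  have L0: "L $ 0 = 0" unfolding L_def by simp
  have G1: "G (Suc m) = fps_const w * fps_X + ((L oo fps_X ^ p) + (G m oo fps_X ^ p))"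
  proof -
    have LX: "L oo fps_X ^ p = fps_const (-w) * fps_X ^ p"
      unfolding L_def using cX_compose[OF X0, of "-w" 1] by simp
    show ?thesis unfolding LX Gc by (simp add: G_def fps_const_neg algebra_simps)
  qed
  have "fps_exp 1 oo G (Suc m) = (fps_exp 1 oo fps_const w * fps_X) * ((fps_exp 1 oo (L oo fps_X ^ p)) * (fps_exp 1 oo (G m oo fps_X ^ p)))"
    unfolding G1 by (subst expc_add; simp add: expc_add L0 G0 X0)
  also have "fps_exp 1 oo (L oo fps_X ^ p) = (fps_exp 1 oo L) oo fps_X ^ p"
    by (rule fps_compose_assoc[OF X0 L0])
  also have "fps_exp 1 oo (G m oo fps_X ^ p) = (fps_exp 1 oo G m) oo fps_X ^ p"
    by (rule fps_compose_assoc[OF X0 G0])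
  also have "fps_exp 1 oo L = fps_exp (-w)" unfolding L_def by simp
  finally have E: "fps_exp 1 oo G (Suc m) = (fps_exp w * (fps_exp (-w) oo fps_X ^ p)) * ((fps_exp 1 oo G m) oo fps_X ^ p)"
    by (simp add: mult.assoc)
  have T: "(fps_exp w * (fps_exp (-w) oo fps_X ^ p)) $ k = theta p w k" for k
    unfolding mult_compose_Xp_nth[OF p] theta_def by (simp add: fps_exp_nth)
  have "lam p (Suc m) w n = (\<Sum>j\<le>n div p. (fps_exp w * (fps_exp (-w) oo fps_X ^ p)) $ (n - p * j) * (fps_exp 1 oo G m) $ j)"
    unfolding lamG E by (rule mult_compose_Xp_nth[OF p])
  also have "\<dots> = (\<Sum>j\<le>n div p. theta p w (n - p * j) * lam p m w j)"
    unfolding T lamG ..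
  finally show ?thesis .
qed




context dw begin

lemma inI_df: "inI p w (digit_sum p n) (w ^ digit_sum p n / of_nat (digit_fact p n))"
proof -
  have "loc_int p (1 / of_nat (digit_fact p n))" by (rule loc_inv_nat[OF prime df_ndvd[OF prime]])
  hence "inI p w (digit_sum p n) (w ^ digit_sum p n * of_rat (1 / of_nat (digit_fact p n)))"
    by (rule inI_rat[OF prime])
  thus ?thesis by (simp add: of_rat_divide)
qed

lemma inI_fact: "n0 < p \<Longrightarrow> inI p w n0 (w ^ n0 / of_nat (fact n0))"
proof -
  assume "n0 < p"
  hence "\<not> p dvd fact n0" using prime_dvd_fact_iff[OF prime] by simp
  hence "loc_int p (1 / of_nat (fact n0))" by (rule loc_inv_nat[OF prime])
  hence "inI p w n0 (w ^ n0 * of_rat (1 / of_nat (fact n0)))"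
    by (rule inI_rat[OF prime])
  thus ?thesis by (simp only: of_rat_divide of_rat_1 of_rat_of_nat_eq times_divide_eq_right mult_1_right)
qed

definition Pm :: "nat \<Rightarrow> bool" where
  "Pm m \<longleftrightarrow> (\<forall>n. (n < p ^ m \<longrightarrow> inI p w (digit_sum p n + p - 1) (lam p m w n - w ^ digit_sum p n / of_nat (digit_fact p n)))
     \<and> (p ^ m \<le> n \<longrightarrow> inI p w (digit_sum p n + p - 1) (lam p m w n)))"

lemma Pm_weak: assumes "Pm m" shows "inI p w (digit_sum p n) (lam p m w n)"
proof (cases "n < p ^ m")
  case True
  hence "inI p w (digit_sum p n + p - 1) (lam p m w n - w ^ digit_sum p n / of_nat (digit_fact p n))"
    using assms unfolding Pm_def by blast
  hence a: "inI p w (digit_sum p n) (lam p m w n - w ^ digit_sum p n / of_nat (digit_fact p n))"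
    by (rule inI_mono[OF prime, rotated]) (use p2 in simp)
  have "inI p w (digit_sum p n) ((lam p m w n - w ^ digit_sum p n / of_nat (digit_fact p n)) + w ^ digit_sum p n / of_nat (digit_fact p n))"
    by (rule inI_add[OF a inI_df])
  thus ?thesis by simp
next
  case False
  hence "inI p w (digit_sum p n + p - 1) (lam p m w n)" using assms unfolding Pm_def by simp
  thus ?thesis by (rule inI_mono[OF prime, rotated]) (use p2 in simp)
qed

lemma Pm_0: "Pm 0"
  unfolding Pm_def lam_0 using inI_0[OF prime] by auto

lemma Pm_Suc: assumes IH: "Pm m" shows "Pm (Suc m)"
  unfolding Pm_def
proof (intro allI conjI impI)
  fix n
  define n0 where "n0 = n mod p"
  define n' where "n' = n div p"
  have n0p: "n0 < p" unfolding n0_def using p2 by simp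
  have nn: "n = n0 + p * n'" unfolding n0_def n'_def by simp
  have sn: "digit_sum p n = n0 + digit_sum p n'" unfolding nn by (rule ds_low[OF p2 n0p])
  have dn: "digit_fact p n = fact n0 * digit_fact p n'" unfolding nn by (rule df_low[OF p2 n0p])
  have lamS: "lam p (Suc m) w n = theta p w n0 * lam p m w n' + (\<Sum>j<n'. theta p w (n - p * j) * lam p m w j)"
  proof -
    have "lam p (Suc m) w n = (\<Sum>j<Suc n'. theta p w (n - p * j) * lam p m w j)"
      unfolding lam_Suc[OF order_less_le_trans[OF _ p2], simplified] n'_def lessThan_Suc_atMost ..
    also have "\<dots> = (\<Sum>j<n'. theta p w (n - p * j) * lam p m w j) + theta p w (n - p * n') * lam p m w n'"
      by (rule sum.lessThan_Suc)
    also have "n - p * n' = n0" using nn by simp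
    finally show ?thesis by simp
  qed
  have Rin: "inI p w (digit_sum p n + p - 1) (\<Sum>j<n'. theta p w (n - p * j) * lam p m w j)"
  proof (rule inI_sum[OF prime])
    fix j assume "j \<in> {..<n'}"
    hence j: "j < n'" by simp
    have e: "n - p * j = n0 + p * (n' - j)" using nn j by (simp add: diff_mult_distrib2)
    have "1 \<le> n' - j" using j by simp
    hence "p * 1 \<le> p * (n' - j)" by (rule mult_le_mono2)
    hence pk: "p \<le> n - p * j" unfolding e by linarith
    have st: "digit_sum p (n - p * j) = n0 + digit_sum p (n' - j)" unfolding e by (rule ds_low[OF p2 n0p])
    have t: "inI p w (digit_sum p (n - p * j) + p - 1) (theta p w (n - p * j))" by (rule theta_big[OF pk])
    have l: "inI p w (digit_sum p j) (lam p m w j)" by (rule Pm_weak[OF IH])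
    have tl: "inI p w (digit_sum p (n - p * j) + p - 1 + digit_sum p j) (theta p w (n - p * j) * lam p m w j)"
      by (rule inI_mult[OF t l])
    have "digit_sum p n' \<le> digit_sum p (n' - j) + digit_sum p j"
      using ds_add[OF p2, of "n' - j" j] j by simp
    hence "digit_sum p n + p - 1 \<le> digit_sum p (n - p * j) + p - 1 + digit_sum p j"
      unfolding sn st using p2 by simp
    thus "inI p w (digit_sum p n + p - 1) (theta p w (n - p * j) * lam p m w j)"
      by (rule inI_mono[OF prime _ tl])
  qed
  have th0: "theta p w n0 = w ^ n0 / of_nat (fact n0)" by (rule theta_small[OF n0p])
  have f0: "inI p w n0 (theta p w n0)" unfolding th0 by (rule inI_fact[OF n0p])
  {
    assume lt: "n < p ^ Suc m"
    have "n' < p ^ m"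
    proof -
      have "n' * p \<le> n" using nn by simp
      also have "n < p ^ m * p" using lt by (simp add: mult.commute)
      finally have "n' * p < p ^ m * p" .
      thus ?thesis by simp
    qed
    hence h: "inI p w (digit_sum p n' + p - 1) (lam p m w n' - w ^ digit_sum p n' / of_nat (digit_fact p n'))"
      using IH unfolding Pm_def by blast
    have m1: "inI p w (n0 + (digit_sum p n' + p - 1)) (theta p w n0 * (lam p m w n' - w ^ digit_sum p n' / of_nat (digit_fact p n')))"
      by (rule inI_mult[OF f0 h])
    have "w ^ digit_sum p n / of_nat (digit_fact p n) = theta p w n0 * (w ^ digit_sum p n' / of_nat (digit_fact p n'))"
      unfolding sn dn th0 by (simp add: power_add)
    hence eq: "lam p (Suc m) w n - w ^ digit_sum p n / of_nat (digit_fact p n)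
        = theta p w n0 * (lam p m w n' - w ^ digit_sum p n' / of_nat (digit_fact p n')) + (\<Sum>j<n'. theta p w (n - p * j) * lam p m w j)"
      unfolding lamS by (simp add: algebra_simps)
    have "n0 + (digit_sum p n' + p - 1) = digit_sum p n + p - 1" using sn p2 by simp
    thus "inI p w (digit_sum p n + p - 1) (lam p (Suc m) w n - w ^ digit_sum p n / of_nat (digit_fact p n))"
      unfolding eq using inI_add[OF _ Rin] m1 by simp
  }
  {
    assume ge: "p ^ Suc m \<le> n"
    have "p ^ m \<le> n'"
    proof -
      have "p ^ m * p \<le> n0 + n' * p" using ge nn by (simp add: mult.commute)
      hence "p ^ m * p < (n' + 1) * p" using n0p by simp
      hence "p ^ m < n' + 1" using mult_less_cancel2 by blast
      thus ?thesis by simp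
    qed
    hence h: "inI p w (digit_sum p n' + p - 1) (lam p m w n')" using IH unfolding Pm_def by blast
    have m1: "inI p w (n0 + (digit_sum p n' + p - 1)) (theta p w n0 * lam p m w n')"
      by (rule inI_mult[OF f0 h])
    have "n0 + (digit_sum p n' + p - 1) = digit_sum p n + p - 1" using sn p2 by simp
    thus "inI p w (digit_sum p n + p - 1) (lam p (Suc m) w n)"
      unfolding lamS using inI_add[OF _ Rin] m1 by simp
  }
qed

lemma Pm_all: "Pm m"
  by (induction m) (auto intro: Pm_0 Pm_Suc)

end

theorem lemma1p1:
  fixes p m :: nat and varpi :: "'a::field_char_0"
  assumes "prime p"
    and "varpi ^ (p - 1) + of_nat p = 0"
  shows "\<forall>n.
    (n \<le> p ^ m - 1 \<longrightarrow>
       pcong p varpi (digit_sum p n + p - 1) (lam p m varpi n)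
         (varpi ^ digit_sum p n / of_nat (digit_fact p n))) \<and>
    (n \<ge> p ^ m \<longrightarrow>
       pcong p varpi (digit_sum p n + p - 1) (lam p m varpi n) 0)"
proof -
  interpret dw p varpi using assms by unfold_locales
  have pm: "0 < p ^ m" using p2 by simp
  show ?thesis
  proof (intro allI conjI impI)
    fix n
    assume "n \<le> p ^ m - 1"
    hence "n < p ^ m" using pm by linarith
    hence "inI p varpi (digit_sum p n + p - 1) (lam p m varpi n - varpi ^ digit_sum p n / of_nat (digit_fact p n))"
      using Pm_all[of m] unfolding Pm_def by blast
    thus "pcong p varpi (digit_sum p n + p - 1) (lam p m varpi n) (varpi ^ digit_sum p n / of_nat (digit_fact p n))"
      by (rule pcongI[OF assms(1)])
  next
    fix n
    assume "p ^ m \<le> n"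
    hence "inI p varpi (digit_sum p n + p - 1) (lam p m varpi n - 0)"
      using Pm_all[of m] unfolding Pm_def by simp
    thus "pcong p varpi (digit_sum p n + p - 1) (lam p m varpi n) 0"
      by (rule pcongI[OF assms(1)])
  qed
qed


end
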